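(* Let $\mathcal{A}$ be any deterministic algorithm which takes as input a function $g:\mathbb{R}^d\to\mathbb{R}$, accesses $g$ only through zeroth-, first- and second-order oracle queries (values of $g$, $\nabla g$, $\nabla^2 g$ at query points), and outputs a single point $\tilde x(g)\in\mathbb{R}^d$. Then there exists a function $\mathfrak{f}:\mathbb{R}^d\to\mathbb{R}$ that is $1$-Lipschitz, has $8$-Lipschitz gradient, satisfies $\sup_x\mathfrak{f}(x)-\inf_x\mathfrak{f}(x)\le\frac1e$, and has a global minimizer $x^\star\in B(0,10)$, such that $\mathcal{A}(\mathfrak{f})$ must make at least $2^d$ oracle calls to find an $\epsilon$-global minimizer $x^\circ$ of $\mathfrak{f}$ with $\epsilon=\frac{1}{2e}$, i.e. a point with $\mathfrak{f}(x^\circ)-\mathfrak{f}(x^\star)\le\epsilon$.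
   Context: $B(c,r)$ denotes the closed Euclidean ball of radius $r$ centered at $c$. *)

theory Defs
  imports "HOL-Analysis.Analysis"
begin

text \<open>Gradient and Hessian of g : R^d -> R (d = CARD('n)). If they do not exist the
  value is an unspecified constant that does not depend on g.\<close>
definition grad :: "(real^'n \<Rightarrow> real) \<Rightarrow> real^'n \<Rightarrow> real^'n" where
  "grad g x = (SOME G. (g has_derivative (\<lambda>h. G \<bullet> h)) (at x))"

definition hess :: "(real^'n \<Rightarrow> real) \<Rightarrow> real^'n \<Rightarrow> real^'n^'n" where
  "hess g x = (SOME H. (grad g has_derivative (\<lambda>h. H *v h)) (at x))"

type_synonym 'n answer = "real \<times> (real^'n) \<times> (real^'n^'n)"

definition query_ans :: "(real^'n \<Rightarrow> real) \<Rightarrow> real^'n \<Rightarrow> 'n answer" where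
  "query_ans g x = (g x, grad g x, hess g x)"

text \<open>A deterministic algorithm: given the transcript so far (query points with oracle
  answers), it either issues a new query (Inl x) or stops and outputs a point (Inr y).\<close>
type_synonym 'n algorithm = "((real^'n) \<times> 'n answer) list \<Rightarrow> (real^'n) + (real^'n)"

fun transcript :: "'n algorithm \<Rightarrow> (real^'n \<Rightarrow> real) \<Rightarrow> nat \<Rightarrow> ((real^'n) \<times> 'n answer) list" where
  "transcript A g 0 = []"
| "transcript A g (Suc k) =
     (case A (transcript A g k) of
        Inl x \<Rightarrow> transcript A g k @ [(x, query_ans g x)]
      | Inr y \<Rightarrow> transcript A g k)"

definition halts_with :: "'n algorithm \<Rightarrow> (real^'n \<Rightarrow> real) \<Rightarrow> nat \<Rightarrow> real^'n \<Rightarrow> bool" where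
  "halts_with A g k y \<longleftrightarrow> length (transcript A g k) = k \<and> A (transcript A g k) = Inr y"

end

theory Submission
  imports Defs
begin


lemma e_gt2: "2 < exp (1::real)"
proof -
  have "1 + 1/2 \<le> exp (1/2::real)" by (rule exp_ge_add_one_self)
  hence "(3/2)^2 \<le> exp (1/2::real) ^ 2" by (intro power_mono) auto
  also have "exp (1/2::real) ^ 2 = exp 1" by (simp add: exp_double[symmetric])
  finally show ?thesis by (simp add: power2_eq_square)
qed

lemma maxpow_deriv:
  fixes n :: nat
  shows "((\<lambda>t::real. (max 0 t) ^ Suc (Suc n)) has_real_derivative
          real (Suc (Suc n)) * (max 0 t) ^ Suc n) (at t)"
proof (cases "t = 0")
  case False
  show ?thesis
  proof (cases "t > 0")
    case True
    have d: "((\<lambda>t::real. t ^ Suc (Suc n)) has_real_derivative real (Suc (Suc n)) * t ^ Suc n) (at t)"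
      by (rule derivative_eq_intros refl)+ simp
    show ?thesis
      apply (rule has_field_derivative_transform_within_open[where S="{0<..}"])
      using d True by auto
  next
    case False
    with \<open>t \<noteq> 0\<close> have "t < 0" by simp
    show ?thesis
      apply (rule has_field_derivative_transform_within_open[where S="{..<0}" and f="\<lambda>_. 0"])
      using \<open>t < 0\<close> by auto
  qed
next
  case True
  have "((\<lambda>h::real. ((max 0 (0 + h)) ^ Suc (Suc n) - (max 0 0) ^ Suc (Suc n)) / h) \<longlongrightarrow> 0) (at 0)"
  proof (rule Lim_null_comparison)
    show "\<forall>\<^sub>F h in at (0::real). norm (((max 0 (0 + h)) ^ Suc (Suc n) - (max 0 0) ^ Suc (Suc n)) / h) \<le> \<bar>h\<bar> ^ Suc n"
    proof (rule always_eventually, rule allI)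
      fix h :: real
      have "norm (((max 0 (0 + h)) ^ Suc (Suc n) - (max 0 0) ^ Suc (Suc n)) / h) = \<bar>max 0 h\<bar> ^ Suc (Suc n) / \<bar>h\<bar>"
        by (simp add: abs_mult power_abs)
      also have "\<dots> \<le> \<bar>h\<bar> ^ Suc (Suc n) / \<bar>h\<bar>"
        by (intro divide_right_mono power_mono) auto
      also have "\<dots> \<le> \<bar>h\<bar> ^ Suc n"
        by (cases "h = 0") auto
      finally show "norm (((max 0 (0 + h)) ^ Suc (Suc n) - (max 0 0) ^ Suc (Suc n)) / h) \<le> \<bar>h\<bar> ^ Suc n" .
    qed
    show "((\<lambda>h::real. \<bar>h\<bar> ^ Suc n) \<longlongrightarrow> 0) (at 0)"
      by (rule tendsto_eq_intros refl)+ simp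
  qed
  then show ?thesis using True by (simp add: DERIV_def)
qed



definition uu :: "real^'n \<Rightarrow> real^'n \<Rightarrow> real" where
  "uu c x = max 0 (1 - (x - c) \<bullet> (x - c) / 4)"
definition bump :: "real^'n \<Rightarrow> real^'n \<Rightarrow> real" where
  "bump c x = - (1/4) * (uu c x) ^ 3"
definition GG :: "real^'n \<Rightarrow> real^'n \<Rightarrow> real^'n" where
  "GG c x = (3/8 * (uu c x)^2) *\<^sub>R (x - c)"
definition DG :: "real^'n \<Rightarrow> real^'n \<Rightarrow> real^'n \<Rightarrow> real^'n" where
  "DG c x h = (3/8 * (uu c x)^2) *\<^sub>R h - (3/8 * uu c x * ((x - c) \<bullet> h)) *\<^sub>R (x - c)"

lemma inner_part_deriv:
  "((\<lambda>x::real^'n. 1 - (x - c) \<bullet> (x - c) / 4) has_derivative (\<lambda>h. - ((x - c) \<bullet> h) / 2)) (at x)"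
  by (rule has_derivative_eq_rhs, (rule derivative_intros)+, auto simp: fun_eq_iff inner_diff_right inner_commute field_simps)

lemma uu_pow_deriv:
  fixes n :: nat
  shows "((\<lambda>x::real^'n. (uu c x) ^ Suc (Suc n)) has_derivative
     (\<lambda>h. real (Suc (Suc n)) * (uu c x) ^ Suc n * (- ((x - c) \<bullet> h) / 2))) (at x)"
proof -
  have q: "((\<lambda>t::real. (max 0 t) ^ Suc (Suc n)) has_derivative
     (*) (real (Suc (Suc n)) * (max 0 (1 - (x - c) \<bullet> (x - c) / 4)) ^ Suc n))
      (at (1 - (x - c) \<bullet> (x - c) / 4))"
    using maxpow_deriv[of n "1 - (x - c) \<bullet> (x - c) / 4"] unfolding has_field_derivative_def .
  from has_derivative_compose[OF inner_part_deriv q] show ?thesis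
    by (simp add: uu_def mult_ac)
qed

lemma bump_deriv: "(bump c has_derivative (\<lambda>h. GG c x \<bullet> h)) (at x)"
proof -
  have u3: "((\<lambda>x. (uu c x) ^ 3) has_derivative (\<lambda>h. 3 * (uu c x) ^ 2 * (- ((x - c) \<bullet> h) / 2))) (at x)"
    using uu_pow_deriv[where n=1 and c=c and x=x] by (simp add: numeral_eq_Suc)
  have "((\<lambda>x. - (1/4) * (uu c x) ^ 3) has_derivative (\<lambda>h. - (1/4) * (3 * (uu c x) ^ 2 * (- ((x - c) \<bullet> h) / 2)))) (at x)"
    by (rule has_derivative_mult_right[OF u3])
  then show ?thesis
    unfolding bump_def[abs_def] GG_def
    by (rule has_derivative_eq_rhs) (auto simp: inner_diff_left inner_diff_right inner_commute fun_eq_iff field_simps)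
qed

lemma GG_deriv: "(GG c has_derivative DG c x) (at x)"
proof -
  have u2: "((\<lambda>x. (uu c x) ^ 2) has_derivative (\<lambda>h. 2 * (uu c x) * (- ((x - c) \<bullet> h) / 2))) (at x)"
    using uu_pow_deriv[where n=0 and c=c and x=x] by (simp add: numeral_eq_Suc)
  have a: "((\<lambda>x. 3/8 * (uu c x) ^ 2) has_derivative (\<lambda>h. - (3/8 * uu c x * ((x - c) \<bullet> h)))) (at x)"
    using has_derivative_mult_right[OF u2, of "3/8"]
    by (rule has_derivative_eq_rhs) (auto simp: fun_eq_iff)
  have b: "((\<lambda>x. x - c) has_derivative (\<lambda>h. h)) (at x)"
    by (auto intro!: derivative_eq_intros)
  show ?thesis
    unfolding GG_def[abs_def]
    using has_derivative_scaleR[OF a b]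
    by (rule has_derivative_eq_rhs) (auto simp: DG_def fun_eq_iff)
qed

lemma uu_bounds: "0 \<le> uu c x" "uu c x \<le> 1" "uu c x * ((x - c) \<bullet> (x - c)) \<le> 1"
    "uu c x \<noteq> 0 \<Longrightarrow> norm (x - c) < 2"
proof -
  have s0: "0 \<le> (x - c) \<bullet> (x - c)" by simp
  show "0 \<le> uu c x" "uu c x \<le> 1" using s0 by (auto simp: uu_def)
  show "uu c x * ((x - c) \<bullet> (x - c)) \<le> 1"
  proof (cases "(x - c) \<bullet> (x - c) < 4")
    case True
    then have "uu c x = 1 - (x - c) \<bullet> (x - c) / 4" by (simp add: uu_def)
    moreover have "(1 - s/4) * s \<le> 1" for s :: real
    proof -
      have "(1 - s/4) * s = 1 - (s - 2)^2/4" by (simp add: power2_eq_square field_simps)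
      then show ?thesis by simp
    qed
    ultimately show ?thesis by simp
  next
    case False then show ?thesis by (simp add: uu_def)
  qed
  show "norm (x - c) < 2" if "uu c x \<noteq> 0"
  proof -
    from that have "(x - c) \<bullet> (x - c) < 4" by (simp add: uu_def split: if_splits)
    then have "norm (x - c) ^ 2 < 2 ^ 2" by (simp add: power2_norm_eq_inner)
    then show ?thesis using power2_less_imp_less by fastforce
  qed
qed




lemma GG_norm: "norm (GG c x) \<le> 1"
proof (cases "uu c x = 0")
  case True then show ?thesis by (simp add: GG_def)
next
  case False
  then have n: "norm (x - c) < 2" by (rule uu_bounds(4))
  have "uu c x ^ 2 \<le> 1" using uu_bounds(1,2)[of c x] by (simp add: power_le_one)
  then have "norm (GG c x) = 3/8 * uu c x ^ 2 * norm (x - c)"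
    by (simp add: GG_def)
  also have "\<dots> \<le> 3/8 * 1 * 2"
    using \<open>uu c x ^ 2 \<le> 1\<close> n by (intro mult_mono) auto
  finally show ?thesis by simp
qed

lemma DG_onorm: "onorm (DG c x) \<le> 8"
proof -
  have "norm (DG c x h) \<le> 8 * norm h" for h
  proof -
    let ?u = "uu c x" and ?z = "x - c"
    have u0: "0 \<le> ?u" and u1: "?u \<le> 1" and us: "?u * (?z \<bullet> ?z) \<le> 1" using uu_bounds by auto
    have "norm (DG c x h) \<le> norm ((3/8 * ?u^2) *\<^sub>R h) + norm ((3/8 * ?u * (?z \<bullet> h)) *\<^sub>R ?z)"
      unfolding DG_def by (rule norm_triangle_ineq4)
    also have "norm ((3/8 * ?u^2) *\<^sub>R h) = 3/8 * ?u^2 * norm h" by simp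
    also have "norm ((3/8 * ?u * (?z \<bullet> h)) *\<^sub>R ?z) = 3/8 * ?u * \<bar>?z \<bullet> h\<bar> * norm ?z"
      using u0 by (simp add: abs_mult)
    also have "\<dots> \<le> 3/8 * ?u * (norm ?z * norm h) * norm ?z"
      using u0 by (intro mult_right_mono mult_left_mono Cauchy_Schwarz_ineq2) auto
    also have "\<dots> = 3/8 * (?u * (?z \<bullet> ?z)) * norm h"
      by (simp add: dot_square_norm power2_eq_square)
    also have "\<dots> \<le> 3/8 * 1 * norm h"
      using us by (intro mult_right_mono mult_left_mono) auto
    also have "3/8 * ?u^2 * norm h \<le> 3/8 * 1 * norm h"
      using u0 u1 by (intro mult_right_mono mult_left_mono) (auto simp: power_le_one)
    finally show ?thesis using norm_ge_zero[of h] by linarith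
  qed
  then show ?thesis by (rule onorm_le)
qed

lemma inner_unique: "(\<lambda>h. a \<bullet> h) = (\<lambda>h. b \<bullet> h) \<Longrightarrow> a = (b::'a::real_inner)"
  by (metis inner_diff_left inner_eq_zero_iff right_minus_eq)

lemma grad_eqI:
  assumes "(g has_derivative (\<lambda>h. G \<bullet> h)) (at x)"
  shows "grad g x = G"
proof -
  have ex: "\<exists>G. (g has_derivative (\<lambda>h. G \<bullet> h)) (at x)" using assms by blast
  have "(g has_derivative (\<lambda>h. grad g x \<bullet> h)) (at x)"
    unfolding grad_def by (rule someI_ex[OF ex])
  from has_derivative_unique[OF this assms] show ?thesis by (rule inner_unique)
qed

lemma grad_bump: "grad (bump c) x = GG c x"
  by (rule grad_eqI[OF bump_deriv])

lemma bump_lip: "1-lipschitz_on UNIV (bump c)"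
proof (rule lipschitz_onI)
  fix x y
  have "norm (bump c x - bump c y) \<le> 1 * norm (x - y)"
  proof (rule differentiable_bound[where S=UNIV and f'="\<lambda>x h. GG c x \<bullet> h"])
    show "\<And>x. x \<in> UNIV \<Longrightarrow> (bump c has_derivative (\<lambda>h. GG c x \<bullet> h)) (at x within UNIV)"
      using bump_deriv by auto
    show "onorm (\<lambda>h. GG c x \<bullet> h) \<le> 1" for x
    proof (rule onorm_le)
      fix h show "norm (GG c x \<bullet> h) \<le> 1 * norm h"
        using Cauchy_Schwarz_ineq2[of "GG c x" h] GG_norm[of c x]
        by (simp add: order_trans[OF _ mult_right_mono[of "norm (GG c x)" 1 "norm h", simplified]])
    qed
  qed auto
  then show "dist (bump c x) (bump c y) \<le> 1 * dist x y" by (simp add: dist_norm)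
qed simp

lemma grad_lip: "8-lipschitz_on UNIV (grad (bump c))"
proof (rule lipschitz_onI)
  fix x y
  have "norm (GG c x - GG c y) \<le> 8 * norm (x - y)"
    by (rule differentiable_bound[where S=UNIV and f'="DG c"]) (auto intro: GG_deriv DG_onorm)
  then show "dist (grad (bump c) x) (grad (bump c) y) \<le> 8 * dist x y" by (simp add: dist_norm grad_bump)
qed simp

lemma bump_range: "- (1/4) \<le> bump c x" "bump c x \<le> 0" "bump c c = - (1/4)"
  using uu_bounds(1,2)[of c x] by (auto simp: bump_def uu_def power_le_one)

lemma bump_zero: "norm (x - c) \<ge> 2 \<Longrightarrow> bump c x = 0"
  using uu_bounds(4)[of c x] by (auto simp: bump_def)




lemma grad_local:
  assumes "open V" "\<And>y. y \<in> V \<Longrightarrow> f y = g y" "x \<in> V"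
  shows "grad f x = grad g x"
proof -
  have "(f has_derivative D) (at x) \<longleftrightarrow> (g has_derivative D) (at x)" for D
    using assms has_derivative_transform_within_open[of f D x UNIV V g]
      has_derivative_transform_within_open[of g D x UNIV V f] by auto
  then show ?thesis unfolding grad_def by simp
qed

lemma query_local:
  assumes "open V" "\<And>y. y \<in> V \<Longrightarrow> f y = g y" "x \<in> V"
  shows "query_ans f x = query_ans g x"
proof -
  have gr: "\<And>y. y \<in> V \<Longrightarrow> grad f y = grad g y" using grad_local[of V f g] assms by blast
  have "(grad f has_derivative D) (at x) \<longleftrightarrow> (grad g has_derivative D) (at x)" for D
    using assms gr has_derivative_transform_within_open[of "grad f" D x UNIV V "grad g"]
      has_derivative_transform_within_open[of "grad g" D x UNIV V "grad f"] by auto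
  then have "hess f x = hess g x" unfolding hess_def by simp
  then show ?thesis using assms gr by (simp add: query_ans_def)
qed

lemma transcript_local:
  assumes "open V" "\<And>y. y \<in> V \<Longrightarrow> f y = g y"
    and "\<And>i x. i < K \<Longrightarrow> A (transcript A g i) = Inl x \<Longrightarrow> x \<in> V"
  shows "j \<le> K \<Longrightarrow> transcript A f j = transcript A g j"
proof (induction j)
  case 0 then show ?case by simp
next
  case (Suc j)
  then have IH: "transcript A f j = transcript A g j" by simp
  show ?case
  proof (cases "A (transcript A g j)")
    case (Inl x)
    then have "x \<in> V" using assms(3)[of j x] Suc.prems by simp
    then have "query_ans f x = query_ans g x" using query_local[of V f g x] assms(1,2) by blast
    then show ?thesis using Inl IH by simp
  next
    case (Inr y) then show ?thesis using IH by simp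
  qed
qed

lemma avoid_points:
  fixes P :: "(real^'n) set"
  assumes "finite P" "card P \<le> 2 ^ CARD('n)"
  shows "\<exists>c. norm c \<le> 10 \<and> (\<forall>p\<in>P. 2 < norm (p - c))"
proof (rule ccontr)
  assume "\<not> ?thesis"
  then have sub: "cball 0 10 \<subseteq> (\<Union>p\<in>P. cball p 2)"
    by (force simp: dist_norm norm_minus_commute)
  let ?w = "unit_ball_vol (real CARD('n))"
  have w: "?w > 0" by simp
  have "measure lborel (cball (0::real^'n) 10) \<le> measure lborel (\<Union>p\<in>P. cball p 2)"
    by (rule measure_mono_fmeasurable[OF sub])
      (auto intro!: fmeasurable_compact compact_UN assms(1))
  also have "\<dots> \<le> (\<Sum>p\<in>P. measure lborel (cball p (2::real)))"
    by (rule measure_UNION_le) (auto simp: assms(1))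
  also have "\<dots> = real (card P) * (?w * 2 ^ CARD('n))"
    by (simp add: content_cball)
  also have "\<dots> \<le> 2 ^ CARD('n) * (?w * 2 ^ CARD('n))"
    using assms(2) w by (intro mult_right_mono) (auto simp flip: of_nat_le_iff)
  finally have "?w * 10 ^ CARD('n) \<le> ?w * (2 ^ CARD('n) * 2 ^ CARD('n))"
    by (simp add: content_cball mult_ac)
  then have "(10::real) ^ CARD('n) \<le> 4 ^ CARD('n)"
    using w by (simp add: power_mult_distrib[symmetric])
  moreover have "(4::real) ^ CARD('n) < 10 ^ CARD('n)"
    by (rule power_strict_mono) auto
  ultimately show False by simp
qed




theorem theoremB1:
  fixes A :: "('n::finite) algorithm"
  shows "\<exists>f :: real^'n \<Rightarrow> real.
     1-lipschitz_on UNIV f \<and>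
     (\<forall>x. (f has_derivative (\<lambda>h. grad f x \<bullet> h)) (at x)) \<and>
     8-lipschitz_on UNIV (grad f) \<and>
     bounded (range f) \<and>
     (SUP x. f x) - (INF x. f x) \<le> exp (-1) \<and>
     (\<exists>xs. norm xs \<le> 10 \<and> (\<forall>x. f xs \<le> f x) \<and>
        (\<forall>k y. halts_with A f k y \<and> f y - f xs \<le> 1 / (2 * exp 1) \<longrightarrow> k \<ge> 2 ^ CARD('n)))"
proof -
  define g0 :: "real^'n \<Rightarrow> real" where "g0 = (\<lambda>_. 0)"
  define K :: nat where "K = 2 ^ CARD('n)"
  define P where "P = (\<lambda>i. case_sum id id (A (transcript A g0 i))) ` {..<K}"
  have finP: "finite P" unfolding P_def by simp
  have cardP: "card P \<le> 2 ^ CARD('n)"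
    unfolding P_def K_def by (rule order_trans[OF card_image_le]) auto
  obtain c :: "real^'n" where c10: "norm c \<le> 10" and cP: "\<forall>p\<in>P. 2 < norm (p - c)"
    using avoid_points[OF finP cardP] by blast
  define V where "V = {x. 2 < norm (x - c)}"
  have openV: "open V" unfolding V_def
    by (rule open_Collect_less) (auto intro!: continuous_intros)
  have agree: "\<And>y. y \<in> V \<Longrightarrow> bump c y = g0 y"
    unfolding V_def g0_def by (rule bump_zero) simp
  have PV: "P \<subseteq> V" using cP by (auto simp: V_def)
  have queries: "\<And>i x. i < K \<Longrightarrow> A (transcript A g0 i) = Inl x \<Longrightarrow> x \<in> V"
  proof -
    fix i x assume "i < K" "A (transcript A g0 i) = Inl x"
    then have "x \<in> P" unfolding P_def by (force simp: image_iff)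
    then show "x \<in> V" using PV by blast
  qed
  have e2: "2 < exp (1::real)" by (rule e_gt2)
  have e3: "exp (1::real) \<le> 3" by (rule exp_le)
  show ?thesis
  proof (intro exI[of _ "bump c"] conjI allI impI)
    show "1-lipschitz_on UNIV (bump c)" by (rule bump_lip)
    show "(bump c has_derivative (\<lambda>h. grad (bump c) x \<bullet> h)) (at x)" for x
      using bump_deriv[of c x] by (simp add: grad_bump)
    show "8-lipschitz_on UNIV (grad (bump c))" by (rule grad_lip)
    show "bounded (range (bump c))"
      unfolding bounded_iff
    proof (intro exI[of _ "1/4"] ballI)
      fix v assume "v \<in> range (bump c)"
      then obtain x where "v = bump c x" by blast
      then show "norm v \<le> 1/4" using bump_range(1,2)[of c x] by simp
    qed
    have s: "(SUP x. bump c x) \<le> 0" by (rule cSUP_least) (auto simp: bump_range)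
    have i: "- (1/4) \<le> (INF x. bump c x)" by (rule cINF_greatest) (auto simp: bump_range)
    have "1/4 \<le> exp (-1::real)"
      using e3 by (simp add: exp_minus field_simps)
    then show "(SUP x. bump c x) - (INF x. bump c x) \<le> exp (-1)" using s i by linarith
    show "\<exists>xs. norm xs \<le> 10 \<and> (\<forall>x. bump c xs \<le> bump c x) \<and>
        (\<forall>k y. halts_with A (bump c) k y \<and> bump c y - bump c xs \<le> 1 / (2 * exp 1) \<longrightarrow> k \<ge> 2 ^ CARD('n))"
    proof (intro exI[of _ c] conjI allI impI)
      show "norm c \<le> 10" by (rule c10)
      show "bump c c \<le> bump c x" for x using bump_range(1)[of c x] bump_range(3)[where c=c] by simp
      fix k y assume H: "halts_with A (bump c) k y \<and> bump c y - bump c c \<le> 1 / (2 * exp 1)"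
      show "2 ^ CARD('n) \<le> k"
      proof (rule ccontr)
        assume "\<not> 2 ^ CARD('n) \<le> k"
        then have kK: "k < K" by (simp add: K_def)
        have "transcript A (bump c) k = transcript A g0 k"
          by (rule transcript_local[OF openV agree queries]) (use kK in auto)
        with H have "A (transcript A g0 k) = Inr y" by (simp add: halts_with_def)
        then have "y \<in> P" unfolding P_def using kK by (force simp: image_iff)
        then have "y \<in> V" using PV by blast
        then have "bump c y = 0" using agree by (simp add: g0_def)
        with H have "1/4 \<le> 1 / (2 * exp (1::real))" by (simp add: bump_range(3))
        with e2 show False by (simp add: field_simps)
      qed
    qed
  qed
qed


end
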